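(* Let $2\sqrt2-2<a\le1$ and $f_a(z)=z\big(z^2+(a-2)z+1-2a\big)$. Define subintervals of $[-a,2]$: $$I_1=\Big[-a,\tfrac{2-a-\sqrt{a^2+4a}}2\Big],\ I_2=\Big[\tfrac{2-a-\sqrt{a^2+4a}}2,0\Big],\ I_3=[0,0.25],\ I_4=\Big[0.25,\tfrac{2-a+\sqrt{a^2+4a}}2\Big],\ I_5=\Big[\tfrac{2-a+\sqrt{a^2+4a}}2,2\Big].$$ Then (i) $f_a(I_1)=I_1\cup I_2$, $f_a(I_4)=I_1\cup I_2$, and $f_a(I_5)=I_3\cup I_4\cup I_5$; (ii) $f_a(I_2)\subseteq I_3$ and $f_a(I_3)\subseteq I_2$.
   Context: For a set $S$, $f(S)=\{f(x):x\in S\}$. *)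

theory Defs
  imports Complex_Main
begin

definition fa :: "real \<Rightarrow> real \<Rightarrow> real" where
  "fa a z = z * (z^2 + (a - 2) * z + 1 - 2 * a)"

end

theory Submission
  imports Defs
begin

lemma fa_cont: "continuous_on S (fa a)"
  unfolding fa_def by (intro continuous_intros)

theorem lemma7:
  fixes a :: real
  assumes "2 * sqrt 2 - 2 < a" and "a \<le> 1"
  defines "I1 \<equiv> {-a .. (2 - a - sqrt (a^2 + 4*a)) / 2}"
      and "I2 \<equiv> {(2 - a - sqrt (a^2 + 4*a)) / 2 .. 0}"
      and "I3 \<equiv> {0 .. 1/4}"
      and "I4 \<equiv> {1/4 .. (2 - a + sqrt (a^2 + 4*a)) / 2}"
      and "I5 \<equiv> {(2 - a + sqrt (a^2 + 4*a)) / 2 .. 2}"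
  shows "fa a ` I1 = I1 \<union> I2 \<and> fa a ` I4 = I1 \<union> I2 \<and> fa a ` I5 = I3 \<union> I4 \<union> I5
         \<and> fa a ` I2 \<subseteq> I3 \<and> fa a ` I3 \<subseteq> I2"
proof -
  have "1.4 \<le> sqrt 2" by (rule real_le_rsqrt) (simp add: power2_eq_square)
  hence a8: "a > 0.8" using assms(1) by simp
  define s where "s = sqrt (a^2 + 4*a)"
  have s0: "s \<ge> 0" using a8 unfolding s_def by simp
  have s2: "s^2 = a^2 + 4*a" using a8 unfolding s_def by simp
  have sa: "s \<ge> a"
  proof (rule power2_le_imp_le)
    show "a^2 \<le> s^2" using s2 a8 by simp
  qed (use s0 in simp)
  have sb: "s \<le> 2 + a"
  proof (rule power2_le_imp_le)
    show "s^2 \<le> (2+a)^2" using s2 by (simp add: power2_eq_square algebra_simps)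
  qed (use a8 in simp)
  have sc: "s \<ge> (14 - a)/8"
  proof -
    have h: "0 \<le> a*a" by simp
    have "s^2 - ((14 - a)/8)^2 = (63*(a*a) + 284*a - 196)/64" using s2 by (simp add: power2_eq_square field_simps)
    moreover have "196 \<le> 63*(a*a) + 284*a" using h a8 by linarith
    hence "0 \<le> (63*(a*a) + 284*a - 196)/64" by simp
    ultimately have "((14 - a)/8)^2 \<le> s^2" by linarith
    thus ?thesis using s0 by (rule power2_le_imp_le)
  qed
  define p where "p = (2 - a - s)/2"
  define q where "q = (2 - a + s)/2"
  have fz: "fa a z = z * (z - p) * (z - q)" for z
  proof -
    have "(z - p) * (z - q) = z^2 - (2-a)*z + ((2-a)^2 - s^2)/4"
      unfolding p_def q_def by (simp add: field_simps power2_eq_square)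
    also have "\<dots> = z^2 + (a-2)*z + 1 - 2*a" using s2 by (simp add: field_simps power2_eq_square)
    finally show ?thesis unfolding fa_def by (metis mult.assoc)
  qed
  have fmin: "fa a z + a = (z + a) * (z - 1)^2" for z unfolding fa_def by (simp add: algebra_simps power2_eq_square)
  have fmax: "fa a z - 2 = (z - 2) * (z^2 + a*z + 1)" for z unfolding fa_def by (simp add: algebra_simps power2_eq_square)
  have p0: "p < 0" and pa: "-a \<le> p" and q1: "1 \<le> q" and q2: "q \<le> 2"
    using sa sb sc a8 unfolding p_def q_def by auto
  have fp: "fa a p = 0" and fq: "fa a q = 0" using fz by auto
  have fma: "fa a (-a) = -a" "fa a 1 = -a" "fa a 2 = 2" unfolding fa_def by (auto simp: algebra_simps power2_eq_square)
  have S1: "I1 = {-a..p}" "I2 = {p..0}" "I4 = {1/4..q}" "I5 = {q..2}"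
    unfolding I1_def I2_def I4_def I5_def p_def q_def s_def by auto
  have U: "I1 \<union> I2 = {-a..0}" using S1 p0 pa by auto
  have U2: "I3 \<union> I4 \<union> I5 = {0..2}" using S1 q1 q2 unfolding I3_def by auto
  have ge_a: "fa a z \<ge> -a" if "z \<ge> -a" for z
  proof -
    have "0 \<le> (z + a) * (z - 1)^2" using that by simp
    thus ?thesis using fmin[of z] by linarith
  qed
  have le2: "fa a z \<le> 2" if "z \<le> 2" for z
  proof -
    have "a*a \<le> 1" using a8 assms(2) by (intro mult_le_one) auto
    moreover have "z^2 + a*z + 1 = (z + a/2)^2 + (1 - a*a/4)" by (simp add: power2_eq_square field_simps)
    moreover have "0 \<le> (z + a/2)^2" by simp
    ultimately have "z^2 + a*z + 1 > 0" by linarith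
    hence "(z - 2) * (z^2 + a*z + 1) \<le> 0" using that by (intro mult_nonpos_nonneg) auto
    thus ?thesis using fmax[of z] by linarith
  qed
  have r1: "fa a ` I1 = I1 \<union> I2"
  proof
    show "fa a ` I1 \<subseteq> I1 \<union> I2" unfolding U unfolding S1
    proof (rule image_subsetI)
      fix z assume "z \<in> {-a..p}"
      hence z: "-a \<le> z" "z \<le> p" by auto
      have "0 \<le> z * (z - p)" using z p0 by (intro mult_nonpos_nonpos) auto
      hence "z * (z - p) * (z - q) \<le> 0"
        using z p0 q1 by (intro mult_nonneg_nonpos) auto
      thus "fa a z \<in> {-a..0}" using ge_a z fz by auto
    qed
    show "I1 \<union> I2 \<subseteq> fa a ` I1" unfolding U unfolding S1
    proof
      fix y assume "y \<in> {-a..0::real}"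
      then obtain x where "-a \<le> x" "x \<le> p" "fa a x = y"
        using IVT'[of "fa a" "-a" y p] fma fp pa fa_cont by auto
      thus "y \<in> fa a ` {-a..p}" by auto
    qed
  qed
  have r4: "fa a ` I4 = I1 \<union> I2"
  proof
    show "fa a ` I4 \<subseteq> I1 \<union> I2" unfolding U unfolding S1
    proof (rule image_subsetI)
      fix z assume "z \<in> {1/4..q}"
      hence z: "1/4 \<le> z" "z \<le> q" by auto
      have "0 \<le> z * (z - p)" using z p0 by (intro mult_nonneg_nonneg) auto
      hence "z * (z - p) * (z - q) \<le> 0"
        using z by (intro mult_nonneg_nonpos) auto
      thus "fa a z \<in> {-a..0}" using ge_a[of z] a8 z fz by auto
    qed
    show "I1 \<union> I2 \<subseteq> fa a ` I4" unfolding U unfolding S1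
    proof
      fix y assume "y \<in> {-a..0::real}"
      then obtain x where "1 \<le> x" "x \<le> q" "fa a x = y"
        using IVT'[of "fa a" 1 y q] fma fq q1 fa_cont by auto
      thus "y \<in> fa a ` {1/4..q}" by auto
    qed
  qed
  have r5: "fa a ` I5 = I3 \<union> I4 \<union> I5"
  proof
    show "fa a ` I5 \<subseteq> I3 \<union> I4 \<union> I5" unfolding U2 unfolding S1
    proof (rule image_subsetI)
      fix z assume "z \<in> {q..2}"
      hence z: "q \<le> z" "z \<le> 2" by auto
      have "0 \<le> z * (z - p)" using z p0 q1 by (intro mult_nonneg_nonneg) auto
      moreover have "0 \<le> z - q" using z by simp
      ultimately have "z * (z - p) * (z - q) \<ge> 0"
        by (rule mult_nonneg_nonneg)
      thus "fa a z \<in> {0..2}" using le2 z fz by auto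
    qed
    show "I3 \<union> I4 \<union> I5 \<subseteq> fa a ` I5" unfolding U2 unfolding S1
    proof
      fix y assume "y \<in> {0..2::real}"
      then obtain x where "q \<le> x" "x \<le> 2" "fa a x = y"
        using IVT'[of "fa a" q y 2] fma fq q2 fa_cont by auto
      thus "y \<in> fa a ` {q..2}" by auto
    qed
  qed
  have r2: "fa a ` I2 \<subseteq> I3"
    unfolding S1 I3_def
  proof (rule image_subsetI)
    fix z assume "z \<in> {p..0}"
    hence z: "p \<le> z" "z \<le> 0" by auto
    have "z * (z - p) \<le> 0" using z by (intro mult_nonpos_nonneg) auto
    hence "z * (z - p) * (z - q) \<ge> 0"
      using z q1 by (intro mult_nonpos_nonpos) auto
    moreover have "fa a z \<le> 1/4"
    proof -
      define w where "w = -z"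
      have w: "w \<ge> 0" using z w_def by simp
      have "fa a z = w * (2*a - 1 - (2-a)*w - w^2)" unfolding fa_def w_def by (simp add: algebra_simps power2_eq_square)
      also have "\<dots> \<le> w * (1 - w - w^2)"
      proof -
        have "w * (2*a - 1 - (2-a)*w - w^2) - w * (1 - w - w^2) = w * ((a - 1) * (2 + w))"
          by (simp add: algebra_simps)
        also have "\<dots> \<le> 0" using w assms(2) by (simp add: mult_nonneg_nonpos mult_nonpos_nonneg)
        finally show ?thesis by simp
      qed
      also have "\<dots> \<le> 1/4"
      proof -
        have "1/4 - w * (1 - w - w^2) = (w - 1/2)^2 + w^3" by (simp add: algebra_simps power2_eq_square power3_eq_cube)
        thus ?thesis using w by (smt (verit) zero_le_power2 zero_le_power)
      qed
      finally show ?thesis .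
    qed
    ultimately show "fa a z \<in> {0..1/4}" using fz by auto
  qed
  have r3: "fa a ` I3 \<subseteq> I2"
    unfolding S1 I3_def
  proof (rule image_subsetI)
    fix z :: real assume "z \<in> {0..1/4}"
    hence z: "0 \<le> z" "z \<le> 1/4" by auto
    have "0 \<le> z * (z - p)" using z p0 by (intro mult_nonneg_nonneg) auto
    hence "z * (z - p) * (z - q) \<le> 0"
      using z q1 by (intro mult_nonneg_nonpos) auto
    moreover have "fa a z \<ge> p"
    proof -
      have e: "fa a z = z*(1-2*a) + (a-2)*z^2 + z^3" unfolding fa_def
        by (simp add: algebra_simps power2_eq_square power3_eq_cube)
      have "0 \<le> z^3" using z by simp
      hence "fa a z \<ge> z*(1-2*a) + (a-2)*z^2" using e by linarith
      moreover have "z*(1-2*a) \<ge> (1-2*a)/4"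
      proof -
        have "0 \<le> (z - 1/4)*(1-2*a)" using z a8 by (intro mult_nonpos_nonpos) auto
        moreover have "(z - 1/4)*(1-2*a) = z*(1-2*a) - (1-2*a)/4" by (simp add: field_simps)
        ultimately show ?thesis by linarith
      qed
      moreover have "(a-2)*z^2 \<ge> (a-2)/16"
      proof -
        have "z^2 \<le> (1/4)^2" using z by (intro power_mono) auto
        hence "0 \<le> (a-2)*(z^2 - 1/16)" using assms(2) by (intro mult_nonpos_nonpos) (auto simp: power2_eq_square)
        moreover have "(a-2)*(z^2 - 1/16) = (a-2)*z^2 - (a-2)/16" by (simp add: field_simps)
        ultimately show ?thesis by linarith
      qed
      moreover have "(1-2*a)/4 + (a-2)/16 \<ge> p" using sc unfolding p_def by (simp add: field_simps)
      ultimately show ?thesis by linarith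
    qed
    ultimately show "fa a z \<in> {p..0}" using fz by auto
  qed
  show ?thesis using r1 r2 r3 r4 r5 by blast
qed

end
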